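(* Let $S=\left\{\begin{pmatrix}\alpha&a&b\\0&\alpha&c\\0&0&\alpha\end{pmatrix}:\alpha,a,b,c\in\mathbb C\right\}$, normed by the operator norm of $3\times 3$ matrices acting on $\mathbb C^3$ (Euclidean norm). Let $A$ be $S$ with the multiplication $(\alpha I+M)(\beta I+N)=\alpha\beta I+\alpha N+\beta M$ for strictly upper triangular $M,N$ (the unitization of the strictly upper triangular matrices with zero multiplication), and let $B$ be $S$ with the usual matrix multiplication. Then $A^{-1}=B^{-1}=\{\alpha\neq 0\}$ as sets, the map $T:A^{-1}\to B^{-1}$, $T(M)=M+F$ with $F=\begin{pmatrix}0&0&7\\0&0&0\\0&0&0\end{pmatrix}$, is a well-defined surjective isometry, $A$ is commutative but not semisimple, and $A^{-1}$ is not isomorphic as a group to $B^{-1}$.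
   Context: The metric on $A^{-1}$ and $B^{-1}$ is the one induced by the operator norm. *)

theory Defs
  imports "HOL-Analysis.Analysis" "HOL-Algebra.Group"
begin

type_synonym cmat3 = "complex^3^3"

definition tri :: "complex \<Rightarrow> complex \<Rightarrow> complex \<Rightarrow> complex \<Rightarrow> cmat3" where
  "tri \<alpha> a b c = (\<chi> i j. if i = j then \<alpha>
      else if i = 1 \<and> j = 2 then a
      else if i = 1 \<and> j = 3 then b
      else if i = 2 \<and> j = 3 then c else 0)"

definition S :: "cmat3 set" where
  "S = {tri \<alpha> a b c | \<alpha> a b c. True}"

definition opnorm :: "cmat3 \<Rightarrow> real" where
  "opnorm M = onorm (\<lambda>v::complex^3. M *v v)"

definition diagc :: "cmat3 \<Rightarrow> complex" where
  "diagc X = X $ 1 $ 1"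

definition strictpart :: "cmat3 \<Rightarrow> cmat3" where
  "strictpart X = X - mat (diagc X)"

definition multA :: "cmat3 \<Rightarrow> cmat3 \<Rightarrow> cmat3" where
  "multA X Y = mat (diagc X * diagc Y)
     + (\<chi> i j. diagc X * strictpart Y $ i $ j + diagc Y * strictpart X $ i $ j)"

definition Ainv :: "cmat3 set" where
  "Ainv = {X \<in> S. \<exists>Y \<in> S. multA X Y = mat 1 \<and> multA Y X = mat 1}"

definition Binv :: "cmat3 set" where
  "Binv = {X \<in> S. \<exists>Y \<in> S. X ** Y = mat 1 \<and> Y ** X = mat 1}"

definition Fmat :: cmat3 where
  "Fmat = tri 0 0 7 0"

definition Tmap :: "cmat3 \<Rightarrow> cmat3" where
  "Tmap M = M + Fmat"

definition left_idealA :: "cmat3 set \<Rightarrow> bool" where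
  "left_idealA I \<longleftrightarrow> I \<subseteq> S \<and> 0 \<in> I \<and> (\<forall>x\<in>I. \<forall>y\<in>I. x + y \<in> I) \<and> (\<forall>x\<in>I. - x \<in> I)
     \<and> (\<forall>c::complex. \<forall>x\<in>I. (\<chi> i j. c * x $ i $ j) \<in> I)
     \<and> (\<forall>a\<in>S. \<forall>x\<in>I. multA a x \<in> I)"

definition maximal_left_idealA :: "cmat3 set \<Rightarrow> bool" where
  "maximal_left_idealA I \<longleftrightarrow> left_idealA I \<and> I \<noteq> S
     \<and> (\<forall>J. left_idealA J \<and> J \<noteq> S \<and> I \<subseteq> J \<longrightarrow> J = I)"

definition radA :: "cmat3 set" where
  "radA = \<Inter> {I. maximal_left_idealA I}"

definition groupA :: "cmat3 monoid" where
  "groupA = \<lparr>carrier = Ainv, mult = multA, one = mat 1\<rparr>"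

definition groupB :: "cmat3 monoid" where
  "groupB = \<lparr>carrier = Binv, mult = (**), one = mat 1\<rparr>"

end

theory Submission
  imports Defs
begin

lemma tri_entry: "tri \<alpha> a b c $ i $ j = (if i = j then \<alpha>
      else if i = 1 \<and> j = 2 then a
      else if i = 1 \<and> j = 3 then b
      else if i = 2 \<and> j = 3 then c else 0)"
  by (simp add: tri_def)

lemma tri_eq: "tri \<alpha> a b c = tri \<beta> d e f \<longleftrightarrow> \<alpha> = \<beta> \<and> a = d \<and> b = e \<and> c = f"
  by (auto simp add: vec_eq_iff forall_3 tri_entry)

lemma tri_mult: "tri \<alpha> a b c ** tri \<beta> d e f = tri (\<alpha>*\<beta>) (\<alpha>*d + a*\<beta>) (\<alpha>*e + a*f + b*\<beta>) (\<alpha>*f + c*\<beta>)"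
  by (simp add: vec_eq_iff forall_3 tri_entry matrix_matrix_mult_def sum_3)

lemma mat_tri: "mat x = tri x 0 0 0"
  by (simp add: vec_eq_iff forall_3 tri_entry mat_def)

lemma zero_tri: "(0::cmat3) = tri 0 0 0 0"
  by (simp add: vec_eq_iff forall_3 tri_entry)

lemma diagc_tri: "diagc (tri \<alpha> a b c) = \<alpha>" by (simp add: diagc_def tri_entry)

lemma strict_tri: "strictpart (tri \<alpha> a b c) = tri 0 a b c"
  by (simp add: strictpart_def diagc_tri vec_eq_iff forall_3 tri_entry mat_def)

lemma multA_tri: "multA (tri \<alpha> a b c) (tri \<beta> d e f) = tri (\<alpha>*\<beta>) (\<alpha>*d + \<beta>*a) (\<alpha>*e + \<beta>*b) (\<alpha>*f + \<beta>*c)"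
  by (simp add: multA_def diagc_tri strict_tri vec_eq_iff forall_3 tri_entry mat_def)

lemma add_tri: "tri \<alpha> a b c + tri \<beta> d e f = tri (\<alpha>+\<beta>) (a+d) (b+e) (c+f)"
  by (simp add: vec_eq_iff forall_3 tri_entry)

lemma neg_tri: "- tri \<alpha> a b c = tri (-\<alpha>) (-a) (-b) (-c)"
  by (simp add: vec_eq_iff forall_3 tri_entry)

lemma smul_tri: "(\<chi> i j. k * tri \<alpha> a b c $ i $ j) = tri (k*\<alpha>) (k*a) (k*b) (k*c)"
  by (simp add: vec_eq_iff forall_3 tri_entry)

lemma in_S: "X \<in> S \<longleftrightarrow> (\<exists>\<alpha> a b c. X = tri \<alpha> a b c)"
  by (auto simp: S_def)

lemma SE: "X \<in> S \<Longrightarrow> (\<And>\<alpha> a b c. X = tri \<alpha> a b c \<Longrightarrow> P) \<Longrightarrow> P"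
  by (auto simp: S_def)

lemma tri_S[simp]: "tri \<alpha> a b c \<in> S"
  by (auto simp: S_def)

lemma Ainv_eq: "Ainv = {X \<in> S. diagc X \<noteq> 0}"
proof (rule Set.set_eqI, rule iffI)
  fix X assume "X \<in> Ainv"
  then obtain Y where X: "X \<in> S" and Y: "Y \<in> S" and e: "multA X Y = mat 1"
    by (auto simp: Ainv_def)
  from X Y obtain \<alpha> a b c \<beta> d f g where "X = tri \<alpha> a b c" "Y = tri \<beta> d f g" by (auto simp: in_S)
  with e X show "X \<in> {X \<in> S. diagc X \<noteq> 0}"
    by (auto simp: multA_tri mat_tri tri_eq diagc_tri)
next
  fix X assume "X \<in> {X \<in> S. diagc X \<noteq> 0}"
  then obtain \<alpha> a b c where X: "X = tri \<alpha> a b c" and h: "\<alpha> \<noteq> 0" by (auto simp: in_S diagc_tri)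
  let ?Y = "tri (1/\<alpha>) (-a/\<alpha>^2) (-b/\<alpha>^2) (-c/\<alpha>^2)"
  have "multA X ?Y = mat 1" "multA ?Y X = mat 1"
    using h by (auto simp: X multA_tri mat_tri tri_eq field_simps power2_eq_square)
  then show "X \<in> Ainv" unfolding Ainv_def using X by force
qed

lemma Binv_eq: "Binv = {X \<in> S. diagc X \<noteq> 0}"
proof (rule Set.set_eqI, rule iffI)
  fix X assume "X \<in> Binv"
  then obtain Y where X: "X \<in> S" and Y: "Y \<in> S" and e: "X ** Y = mat 1"
    by (auto simp: Binv_def)
  from X Y obtain \<alpha> a b c \<beta> d f g where "X = tri \<alpha> a b c" "Y = tri \<beta> d f g" by (auto simp: in_S)
  with e X show "X \<in> {X \<in> S. diagc X \<noteq> 0}"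
    by (auto simp: tri_mult mat_tri tri_eq diagc_tri)
next
  fix X assume "X \<in> {X \<in> S. diagc X \<noteq> 0}"
  then obtain \<alpha> a b c where X: "X = tri \<alpha> a b c" and h: "\<alpha> \<noteq> 0" by (auto simp: in_S diagc_tri)
  let ?Y = "tri (1/\<alpha>) (-a/\<alpha>^2) ((a*c - \<alpha>*b)/\<alpha>^3) (-c/\<alpha>^2)"
  have "X ** ?Y = mat 1" "?Y ** X = mat 1"
    using h by (auto simp: X tri_mult mat_tri tri_eq field_simps power2_eq_square power3_eq_cube)
  then show "X \<in> Binv" unfolding Binv_def using X by force
qed

lemma Tmap_tri: "Tmap (tri \<alpha> a b c) = tri \<alpha> a (b+7) c"
  by (simp add: Tmap_def Fmat_def add_tri)

lemma image_T: "Tmap ` Ainv = Binv"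
proof (rule Set.set_eqI, rule iffI)
  fix Z assume "Z \<in> Tmap ` Ainv"
  then obtain X where "X \<in> Ainv" "Z = Tmap X" by auto
  then show "Z \<in> Binv" unfolding Ainv_eq Binv_eq
    by (auto elim!: SE simp: Tmap_tri diagc_tri)
next
  fix Z assume "Z \<in> Binv"
  then obtain \<alpha> a b c where Z: "Z = tri \<alpha> a b c" "\<alpha> \<noteq> 0"
    unfolding Binv_eq by (auto simp: in_S diagc_tri)
  have "tri \<alpha> a (b-7) c \<in> Ainv" using Z unfolding Ainv_eq by (simp add: diagc_tri)
  moreover have "Z = Tmap (tri \<alpha> a (b-7) c)" by (simp add: Z Tmap_tri)
  ultimately show "Z \<in> Tmap ` Ainv" by blast
qed

definition Nset :: "cmat3 set" where "Nset = {X \<in> S. diagc X = 0}"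

lemma N_ideal: "left_idealA Nset"
  unfolding left_idealA_def Nset_def
  by (auto elim!: SE simp: diagc_tri zero_tri add_tri neg_tri smul_tri multA_tri)

lemma N_ne: "Nset \<noteq> S"
proof
  assume "Nset = S"
  then have "tri 1 0 0 0 \<in> Nset" by simp
  then show False by (simp add: Nset_def diagc_tri)
qed

lemma multA_one: "X \<in> S \<Longrightarrow> multA X (mat 1) = X"
  by (auto simp: in_S mat_tri multA_tri)

lemma ideal_sub_N:
  assumes I: "left_idealA I" and ne: "I \<noteq> S"
  shows "I \<subseteq> Nset"
proof
  fix X assume XI: "X \<in> I"
  have XS: "X \<in> S" using I XI by (auto simp: left_idealA_def)
  show "X \<in> Nset"
  proof (rule ccontr)
    assume "X \<notin> Nset"
    then have "X \<in> Ainv" using XS by (simp add: Nset_def Ainv_eq)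
    then obtain Y where Y: "Y \<in> S" "multA Y X = mat 1" by (auto simp: Ainv_def)
    then have one: "mat 1 \<in> I" using I XI unfolding left_idealA_def by metis
    have "S \<subseteq> I"
    proof
      fix Z assume "Z \<in> S"
      then show "Z \<in> I" using multA_one[of Z] one I unfolding left_idealA_def by metis
    qed
    then show False using ne I by (auto simp: left_idealA_def)
  qed
qed

lemma radA_ne: "radA \<noteq> {0}"
proof -
  have "tri 0 1 0 0 \<in> radA"
    unfolding radA_def
  proof
    fix I assume "I \<in> {I. maximal_left_idealA I}"
    then have m: "maximal_left_idealA I" by simp
    then have "I \<subseteq> Nset" using ideal_sub_N by (simp add: maximal_left_idealA_def)
    then have "Nset = I" using m N_ideal N_ne by (simp add: maximal_left_idealA_def)
    then show "tri 0 1 0 0 \<in> I" unfolding Nset_def using diagc_tri tri_S by blast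
  qed
  moreover have "tri 0 1 0 0 \<noteq> (0::cmat3)" by (simp add: zero_tri tri_eq)
  ultimately show ?thesis by auto
qed

lemma multA_comm: "multA X Y = multA Y X"
  by (simp add: multA_def mult.commute add.commute)

lemma not_iso: "\<not> (groupA \<cong> groupB)"
proof
  assume "groupA \<cong> groupB"
  then obtain h where h: "h \<in> hom groupA groupB" "bij_betw h Ainv Binv"
    by (auto simp: is_iso_def iso_def groupA_def groupB_def)
  have hm: "\<And>x y. x \<in> Ainv \<Longrightarrow> y \<in> Ainv \<Longrightarrow> h (multA x y) = h x ** h y"
    using h(1) by (simp add: hom_def groupA_def groupB_def)
  have x: "tri 1 1 0 0 \<in> Binv" and y: "tri 1 0 0 1 \<in> Binv" by (simp_all add: Binv_eq diagc_tri)
  obtain a where a: "a \<in> Ainv" "h a = tri 1 1 0 0" using x h(2) unfolding bij_betw_def by force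
  obtain b where b: "b \<in> Ainv" "h b = tri 1 0 0 1" using y h(2) unfolding bij_betw_def by force
  have "h a ** h b = h b ** h a" using hm[OF a(1) b(1)] hm[OF b(1) a(1)] multA_comm by metis
  then show False using a b by (simp add: tri_mult tri_eq)
qed

theorem mainTheorem6:
  shows "Ainv = {X \<in> S. diagc X \<noteq> 0}
    \<and> Binv = {X \<in> S. diagc X \<noteq> 0}
    \<and> Tmap ` Ainv = Binv
    \<and> (\<forall>X\<in>Ainv. \<forall>Y\<in>Ainv. opnorm (Tmap X - Tmap Y) = opnorm (X - Y))
    \<and> (\<forall>X\<in>S. \<forall>Y\<in>S. multA X Y = multA Y X)
    \<and> radA \<noteq> {0}
    \<and> \<not> (groupA \<cong> groupB)"
  using Ainv_eq Binv_eq image_T radA_ne not_iso multA_comm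
  by (simp add: Tmap_def)

end
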